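(* Assume the Mixing, Uniformly Bounded Functions and Uniform Bracketing Entropy assumptions. For $g\in\mathcal G^*$ let $h_g(Z)=\mathbb E[g_A(S,U)\mid Z]$. Then \[ \sup_{g\in\mathcal G^*}\Big|\frac1n\sum_{i=1}^nh_g(Z_i)^2-\mathbb E[h_g(Z)^2]\Big|=o_p(1). \]
   Context: Setting: MDPUC with finite state space $\mathcal S$, actions $[m]$, confounder space $\mathcal U$ and iid confounders; data $Z_i=(S_i,A_i,S_i')$, $i\in[n]$, generated by a behavior policy from a stationary chain of $X=(Z,U)$; expectations are under this stationary distribution; $n\to\infty$. Mixing: for some $2<p\le\infty$, $\sum_kk^{2/(p-2)}\beta(k)<\infty$ for the $\beta$-mixing coefficients of the $X$-chain. $\mathcal G$ is a normed class of $g=(g_1,\dots,g_m)$, $g_a:\mathcal S\times\mathcal U\to\mathbb R$; $\mathcal G^*=\{g/\|g\|:g\in\mathcal G,\|g\|>0\}$; $\mathcal G^*_a=\{g_a:g\in\mathcal G^*\}$. Uniformly Bounded Functions: there is $0<G<\infty$ with $g_a(s,u)\le G$ for all $g\in\mathcal G^*$, $a,s,u$. Uniform Bracketing Entropy: $\int_0^\infty\sqrt{\log N_{[]}(\epsilon,\mathcal G^*_a,L_p)}d\epsilon<\infty$ for each $a$, with $p$ as in Mixing, $N_{[]}$ the bracketing number. *)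

theory Defs
  imports "HOL-Probability.Probability"
begin

definition gen_sets :: "'w measure \<Rightarrow> 'x measure \<Rightarrow> (nat \<Rightarrow> 'w \<Rightarrow> 'x) \<Rightarrow> nat set \<Rightarrow> 'w set set" where
  "gen_sets M MX X I =
     sets (sigma (space M) (\<Union>j\<in>I. {X j -` B \<inter> space M | B. B \<in> sets MX}))"

definition rv_sets :: "'w measure \<Rightarrow> 'y measure \<Rightarrow> ('w \<Rightarrow> 'y) \<Rightarrow> 'w set set" where
  "rv_sets M N f = sets (vimage_algebra (space M) f N)"

definition join_sets :: "'w measure \<Rightarrow> 'w set set \<Rightarrow> 'w set set \<Rightarrow> 'w set set" where
  "join_sets M F G = sets (sigma (space M) (F \<union> G))"

definition cond_indep :: "'w measure \<Rightarrow> 'w set set \<Rightarrow> 'w set set \<Rightarrow> 'w set set \<Rightarrow> bool" where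
  "cond_indep M Y F G =
     (\<forall>B\<in>Y. AE \<omega> in M.
        real_cond_exp M (sigma (space M) (F \<union> G)) (indicator B) \<omega>
        = real_cond_exp M (sigma (space M) G) (indicator B) \<omega>)"

definition finite_partition_in :: "'w measure \<Rightarrow> 'w set set \<Rightarrow> 'w set set \<Rightarrow> bool" where
  "finite_partition_in M A P \<longleftrightarrow> finite P \<and> P \<subseteq> A \<and> disjoint P \<and> \<Union>P = space M"

definition beta_coef :: "'w measure \<Rightarrow> 'w set set \<Rightarrow> 'w set set \<Rightarrow> real" where
  "beta_coef M A B =
     (SUP PQ \<in> {(P, Q). finite_partition_in M A P \<and> finite_partition_in M B Q}.
        (1/2) * (\<Sum>a\<in>fst PQ. \<Sum>b\<in>snd PQ.
                    \<bar>measure M (a \<inter> b) - measure M a * measure M b\<bar>))"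

definition beta_mix :: "'w measure \<Rightarrow> 'x measure \<Rightarrow> (nat \<Rightarrow> 'w \<Rightarrow> 'x) \<Rightarrow> nat \<Rightarrow> real" where
  "beta_mix M MX X k = (SUP n. beta_coef M (gen_sets M MX X {..n}) (gen_sets M MX X {n+k..}))"

definition strictly_stationary :: "'w measure \<Rightarrow> 'x measure \<Rightarrow> (nat \<Rightarrow> 'w \<Rightarrow> 'x) \<Rightarrow> bool" where
  "strictly_stationary M MX X \<longleftrightarrow>
     (\<forall>k n. distr M (PiM {..<n} (\<lambda>_. MX)) (\<lambda>\<omega>. \<lambda>j\<in>{..<n}. X (k + j) \<omega>)
          = distr M (PiM {..<n} (\<lambda>_. MX)) (\<lambda>\<omega>. \<lambda>j\<in>{..<n}. X j \<omega>))"

definition outer_prob :: "'w measure \<Rightarrow> 'w set \<Rightarrow> real" where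
  "outer_prob M A = Inf {measure M B | B. B \<in> sets M \<and> A \<inter> space M \<subseteq> B}"

definition lp_le :: "'x measure \<Rightarrow> ereal \<Rightarrow> ('x \<Rightarrow> real) \<Rightarrow> real \<Rightarrow> bool" where
  "lp_le \<mu> p f \<epsilon> =
     (if p = \<infinity> then (AE x in \<mu>. \<bar>f x\<bar> \<le> \<epsilon>)
      else (\<epsilon> \<ge> 0 \<and> (\<integral>\<^sup>+ x. ennreal (\<bar>f x\<bar> powr real_of_ereal p) \<partial>\<mu>)
                        \<le> ennreal (\<epsilon> powr real_of_ereal p)))"

definition bracket_cover :: "'x measure \<Rightarrow> ereal \<Rightarrow> real \<Rightarrow> ('x \<Rightarrow> real) set
                              \<Rightarrow> (('x \<Rightarrow> real) \<times> ('x \<Rightarrow> real)) set \<Rightarrow> bool" where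
  "bracket_cover \<mu> p \<epsilon> F B \<longleftrightarrow> finite B \<and>
     (\<forall>(l, u)\<in>B. l \<in> borel_measurable \<mu> \<and> u \<in> borel_measurable \<mu> \<and>
                 (\<forall>x\<in>space \<mu>. l x \<le> u x) \<and> lp_le \<mu> p (\<lambda>x. u x - l x) \<epsilon>) \<and>
     (\<forall>f\<in>F. \<exists>(l, u)\<in>B. \<forall>x\<in>space \<mu>. l x \<le> f x \<and> f x \<le> u x)"

text \<open>bracketing number (infinity if no finite cover exists)\<close>
definition bracket_num :: "'x measure \<Rightarrow> ereal \<Rightarrow> real \<Rightarrow> ('x \<Rightarrow> real) set \<Rightarrow> enat" where
  "bracket_num \<mu> p \<epsilon> F = Inf {enat (card B) | B. bracket_cover \<mu> p \<epsilon> F B}"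

definition sqrt_log_bracket :: "'x measure \<Rightarrow> ereal \<Rightarrow> ('x \<Rightarrow> real) set \<Rightarrow> real \<Rightarrow> ennreal" where
  "sqrt_log_bracket \<mu> p F \<epsilon> =
     (if bracket_num \<mu> p \<epsilon> F = \<infinity> then \<infinity>
      else ennreal (sqrt (ln (max 1 (real (the_enat (bracket_num \<mu> p \<epsilon> F)))))))"

definition finite_bracketing_integral :: "'x measure \<Rightarrow> ereal \<Rightarrow> ('x \<Rightarrow> real) set \<Rightarrow> bool" where
  "finite_bracketing_integral \<mu> p F \<longleftrightarrow>
     (\<integral>\<^sup>+ \<epsilon>\<in>{0<..}. sqrt_log_bracket \<mu> p F \<epsilon> \<partial>lborel) < \<infinity>"

definition mix_exponent :: "ereal \<Rightarrow> real" where
  "mix_exponent p = (if p = \<infinity> then 0 else 2 / (real_of_ereal p - 2))"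

definition is_norm_on_fun :: "(('a \<Rightarrow> 'x \<Rightarrow> real) \<Rightarrow> real) \<Rightarrow> bool" where
  "is_norm_on_fun nrm \<longleftrightarrow>
     (\<forall>g. nrm g \<ge> 0) \<and> (\<forall>g. nrm g = 0 \<longrightarrow> g = (\<lambda>a x. 0)) \<and>
     (\<forall>c g. nrm (\<lambda>a x. c * g a x) = \<bar>c\<bar> * nrm g) \<and>
     (\<forall>g h. nrm (\<lambda>a x. g a x + h a x) \<le> nrm g + nrm h)"

definition normalized_class :: "('a \<Rightarrow> 'x \<Rightarrow> real) set \<Rightarrow> (('a \<Rightarrow> 'x \<Rightarrow> real) \<Rightarrow> real)
                                  \<Rightarrow> ('a \<Rightarrow> 'x \<Rightarrow> real) set" where
  "normalized_class G nrm = {(\<lambda>a x. g a x / nrm g) | g. g \<in> G \<and> nrm g > 0}"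

definition stS :: "('s \<times> 'a \<times> 's) \<times> 'u \<Rightarrow> 's" where "stS x = fst (fst x)"
definition acA :: "('s \<times> 'a \<times> 's) \<times> 'u \<Rightarrow> 'a" where "acA x = fst (snd (fst x))"
definition stS' :: "('s \<times> 'a \<times> 's) \<times> 'u \<Rightarrow> 's" where "stS' x = snd (snd (fst x))"
definition cfU :: "('s \<times> 'a \<times> 's) \<times> 'u \<Rightarrow> 'u" where "cfU x = snd x"
definition obsZ :: "('s \<times> 'a \<times> 's) \<times> 'u \<Rightarrow> 's \<times> 'a \<times> 's" where "obsZ x = fst x"

end

theory Submission
  imports Defs
begin

lemma part_sum_le2:
  assumes pr: "prob_space M"
    and P: "finite_partition_in M A1 P" and Q: "finite_partition_in M A2 Q"
    and A1: "A1 \<subseteq> sets M" and A2: "A2 \<subseteq> sets M"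
  shows "(\<Sum>a\<in>P. \<Sum>b\<in>Q. \<bar>measure M (a \<inter> b) - measure M a * measure M b\<bar>) \<le> 2"
proof -
  interpret prob_space M by fact
  have fP: "finite P" "P \<subseteq> sets M" "disjoint P" "\<Union>P = space M"
    using P A1 unfolding finite_partition_in_def by auto
  have fQ: "finite Q" "Q \<subseteq> sets M" "disjoint Q" "\<Union>Q = space M"
    using Q A2 unfolding finite_partition_in_def by auto
  have sP: "(\<Sum>a\<in>P. measure M a) = 1"
    using measure_Union'[OF fP(1), of M] fP(2,3,4) by (simp add: fmeasurable_eq_sets subset_iff prob_space)
  have sQ: "(\<Sum>b\<in>Q. measure M b) = 1"
    using measure_Union'[OF fQ(1), of M] fQ(2,3,4) by (simp add: fmeasurable_eq_sets subset_iff prob_space)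
  have sI: "(\<Sum>b\<in>Q. measure M (a \<inter> b)) = measure M a" if "a \<in> P" for a
  proof -
    have aS: "a \<in> sets M" using that fP(2) by blast
    have fm: "a \<inter> b \<in> fmeasurable M" if "b \<in> Q" for b
    proof -
      have "b \<in> sets M" using that fQ(2) by blast
      then show ?thesis using aS by (simp add: fmeasurable_eq_sets sets.Int)
    qed
    have pw: "pairwise (\<lambda>i j. disjnt (a \<inter> i) (a \<inter> j)) Q"
      using fQ(3) unfolding pairwise_def disjnt_def by blast
    have "measure M (\<Union>b\<in>Q. a \<inter> b) = (\<Sum>b\<in>Q. measure M (a \<inter> b))"
      by (rule measure_UNION'[OF fQ(1) fm pw])
    moreover have "(\<Union>b\<in>Q. a \<inter> b) = a"
    proof -
      have "a \<subseteq> space M" using that fP(4) by blast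
      then show ?thesis using fQ(4) by blast
    qed
    ultimately show ?thesis by simp
  qed
  have "(\<Sum>a\<in>P. \<Sum>b\<in>Q. \<bar>measure M (a \<inter> b) - measure M a * measure M b\<bar>)
      \<le> (\<Sum>a\<in>P. \<Sum>b\<in>Q. measure M (a \<inter> b) + measure M a * measure M b)"
    by (intro sum_mono) (smt (verit) measure_nonneg zero_le_mult_iff)
  also have "\<dots> = (\<Sum>a\<in>P. measure M a) + (\<Sum>a\<in>P. measure M a) * (\<Sum>b\<in>Q. measure M b)"
  proof -
    have "(\<Sum>a\<in>P. \<Sum>b\<in>Q. measure M (a \<inter> b) + measure M a * measure M b)
       = (\<Sum>a\<in>P. measure M a + measure M a * (\<Sum>b\<in>Q. measure M b))"
      by (rule sum.cong) (simp_all add: sum.distrib sI sum_distrib_left)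
    also have "\<dots> = (\<Sum>a\<in>P. measure M a) + (\<Sum>a\<in>P. measure M a) * (\<Sum>b\<in>Q. measure M b)"
      by (simp add: sum.distrib sum_distrib_right)
    finally show ?thesis .
  qed
  also have "\<dots> = 2" using sP sQ by simp
  finally show ?thesis .
qed

lemma beta_coef_bdd:
  assumes "prob_space M" "A1 \<subseteq> sets M" "A2 \<subseteq> sets M"
  shows "bdd_above ((\<lambda>PQ. (1/2) * (\<Sum>a\<in>fst PQ. \<Sum>b\<in>snd PQ.
                    \<bar>measure M (a \<inter> b) - measure M a * measure M b\<bar>)) `
      {(P, Q). finite_partition_in M A1 P \<and> finite_partition_in M A2 Q})"
  using part_sum_le2[OF assms(1) _ _ assms(2,3)]
  by (intro bdd_aboveI[where M=1]) fastforce

lemma beta_coef_le1: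
  assumes "prob_space M" "A1 \<subseteq> sets M" "A2 \<subseteq> sets M" "space M \<in> A1" "space M \<in> A2"
  shows "beta_coef M A1 A2 \<le> 1"
  unfolding beta_coef_def
proof (rule cSUP_least)
  have "finite_partition_in M A1 {space M}" "finite_partition_in M A2 {space M}"
    using assms unfolding finite_partition_in_def by auto
  then show "{(P, Q). finite_partition_in M A1 P \<and> finite_partition_in M A2 Q} \<noteq> {}" by auto
next
  fix PQ assume "PQ \<in> {(P, Q). finite_partition_in M A1 P \<and> finite_partition_in M A2 Q}"
  then show "1 / 2 * (\<Sum>a\<in>fst PQ. \<Sum>b\<in>snd PQ. \<bar>measure M (a \<inter> b) - measure M a * measure M b\<bar>) \<le> 1"
    using part_sum_le2[OF assms(1) _ _ assms(2,3)] by fastforce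
qed

lemma beta_coef_ge:
  assumes pr: "prob_space M" and A: "A1 \<subseteq> sets M" "A2 \<subseteq> sets M"
    and a: "a \<in> A1" "space M - a \<in> A1" and b: "b \<in> A2" "space M - b \<in> A2"
  shows "\<bar>measure M (a \<inter> b) - measure M a * measure M b\<bar> \<le> 2 * beta_coef M A1 A2"
proof -
  interpret prob_space M by fact
  have as: "a \<subseteq> space M" "b \<subseteq> space M" using a b A sets.sets_into_space by (meson subsetD)+
  have ne: "a \<noteq> space M - a" "b \<noteq> space M - b" using as not_empty by auto
  have P: "finite_partition_in M A1 {a, space M - a}" 
    using a as unfolding finite_partition_in_def by (auto simp: pairwise_def disjnt_def)
  have Q: "finite_partition_in M A2 {b, space M - b}" 
    using b as unfolding finite_partition_in_def by (auto simp: pairwise_def disjnt_def)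
  have "\<bar>measure M (a \<inter> b) - measure M a * measure M b\<bar>
      \<le> (\<Sum>b'\<in>{b, space M - b}. \<bar>measure M (a \<inter> b') - measure M a * measure M b'\<bar>)"
    by (rule member_le_sum) auto
  also have "\<dots> \<le> (\<Sum>a'\<in>{a, space M - a}. \<Sum>b'\<in>{b, space M - b}. \<bar>measure M (a' \<inter> b') - measure M a' * measure M b'\<bar>)"
    by (rule member_le_sum[where f="\<lambda>a'. \<Sum>b'\<in>{b, space M - b}. \<bar>measure M (a' \<inter> b') - measure M a' * measure M b'\<bar>"])
       (auto intro: sum_nonneg)
  also have "\<dots> = 2 * ((1/2) * (\<Sum>a'\<in>fst ({a, space M - a}, {b, space M - b}). \<Sum>b'\<in>snd ({a, space M - a}, {b, space M - b}). \<bar>measure M (a' \<inter> b') - measure M a' * measure M b'\<bar>))"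
    by simp
  also have "\<dots> \<le> 2 * beta_coef M A1 A2"
    unfolding beta_coef_def
    by (intro mult_left_mono cSUP_upper beta_coef_bdd[OF pr A]) (use P Q in auto)
  finally show ?thesis .
qed

lemma sum_inj_le_suminf:
  fixes w :: "nat \<Rightarrow> real"
  assumes "summable w" "\<And>k. 0 \<le> w k" "finite J" "inj_on \<phi> J"
  shows "(\<Sum>j\<in>J. w (\<phi> j)) \<le> suminf w"
proof -
  have "(\<Sum>j\<in>J. w (\<phi> j)) = sum w (\<phi> ` J)" using sum.reindex[OF assms(4), of w] by simp
  also have "\<dots> \<le> suminf w" by (rule sum_le_suminf) (use assms in auto)
  finally show ?thesis .
qed

lemma row_bound:
  fixes w :: "nat \<Rightarrow> real"
  assumes "summable w" "\<And>k. 0 \<le> w k"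
  shows "(\<Sum>j<n. (if j = i then 1 else if j < i then w (i - j) else w (j - i))) \<le> 1 + 2 * suminf w"
proof -
  have "(\<Sum>j<n. (if j = i then 1 else if j < i then w (i - j) else w (j - i)))
     \<le> (\<Sum>j<n. (if j = i then 1 else 0) + (if j < i then w (i - j) else 0) + (if i < j then w (j - i) else 0))"
    by (intro sum_mono) (auto simp: assms(2))
  also have "\<dots> = (\<Sum>j<n. (if j = i then 1 else 0)) + (\<Sum>j\<in>{j\<in>{..<n}. j < i}. w (i - j))
       + (\<Sum>j\<in>{j\<in>{..<n}. i < j}. w (j - i))"
    by (simp add: sum.distrib sum.inter_filter[symmetric])
  also have "\<dots> \<le> 1 + suminf w + suminf w"
  proof (intro add_mono)
    show "(\<Sum>j<n. (if j = i then 1 else 0)) \<le> (1::real)"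
      by (cases "i < n") (simp_all add: sum.delta)
    show "(\<Sum>j\<in>{j\<in>{..<n}. j < i}. w (i - j)) \<le> suminf w"
      by (rule sum_inj_le_suminf) (use assms in \<open>auto simp: inj_on_def\<close>)
    show "(\<Sum>j\<in>{j\<in>{..<n}. i < j}. w (j - i)) \<le> suminf w"
      by (rule sum_inj_le_suminf) (use assms in \<open>auto simp: inj_on_def\<close>)
  qed
  finally show ?thesis by simp
qed

lemma lln_events:
  assumes pr: "prob_space M"
    and A: "\<And>i. A i \<in> sets M"
    and pA: "\<And>i. measure M (A i) = p"
    and cov: "\<And>i j. i < j \<Longrightarrow> \<bar>measure M (A i \<inter> A j) - p * p\<bar> \<le> w (j - i)"
    and w: "summable w" "\<And>k. 0 \<le> w k"
    and n: "0 < n" and eta: "0 < \<eta>"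
  shows "measure M {\<omega>\<in>space M. \<eta> < \<bar>(1 / real n) * (\<Sum>i<n. indicator (A i) \<omega>) - p\<bar>}
          \<le> (1 + 2 * suminf w) / (real n * \<eta>\<^sup>2)"
proof -
  interpret prob_space M by fact
  define V where "V i \<omega> = indicator (A i) \<omega> - p" for i \<omega>
  have intV: "integrable M (V i)" for i
    unfolding V_def by (rule Bochner_Integration.integrable_diff) (use A in \<open>auto intro!: integrable_real_indicator simp: less_top[symmetric]\<close>)
  have meas[measurable]: "V i \<in> borel_measurable M" for i using intV by auto
  have eqVV: "(\<lambda>\<omega>. V i \<omega> * V j \<omega>) = (\<lambda>\<omega>. indicator (A i \<inter> A j) \<omega> - p * indicator (A j) \<omega> - p * indicator (A i) \<omega> + p * p)" for i j
    by (auto simp: V_def fun_eq_iff indicator_def algebra_simps)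
  have i1: "integrable M (indicator (A i \<inter> A j) :: _ \<Rightarrow> real)" "integrable M (indicator (A i) :: _ \<Rightarrow> real)" for i j
    using A[of i] A[of j] by (auto intro!: integrable_real_indicator simp: less_top[symmetric])
  have intVV: "integrable M (\<lambda>\<omega>. V i \<omega> * V j \<omega>)" for i j
    unfolding eqVV using i1 by auto
  have EVV: "(\<integral>\<omega>. V i \<omega> * V j \<omega> \<partial>M) = measure M (A i \<inter> A j) - p * p" for i j
  proof -
    have ms: "A i \<inter> A j \<inter> space M = A i \<inter> A j" "A i \<inter> space M = A i" "A j \<inter> space M = A j"
      using sets.sets_into_space[OF A[of i]] sets.sets_into_space[OF A[of j]] by auto
    show ?thesis unfolding eqVV
      using i1(1)[of i j] i1(2)[of i] i1(2)[of j] pA[of i] pA[of j] ms by (simp add: prob_space)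
  qed
  have bnd: "\<bar>measure M (A i \<inter> A j) - p * p\<bar> \<le> (if j = i then 1 else if j < i then w (i - j) else w (j - i))" for i j
  proof (cases "j = i")
    case True
    have q: "0 \<le> p" "p \<le> 1" using pA[of i] prob_le_1[of "A i"] measure_nonneg[of M "A i"] by auto
    have qq: "0 \<le> p * p" "p * p \<le> 1" using q by (simp_all add: mult_le_one)
    show ?thesis using True q qq pA[of i] by (simp add: abs_le_iff) (smt (verit) mult_nonneg_nonneg)
  next
    case False
    then show ?thesis using cov[of i j] cov[of j i] by (auto simp: Int_commute)
  qed
  define S where "S \<omega> = (\<Sum>i<n. V i \<omega>)" for \<omega>
  have intS2: "integrable M (\<lambda>\<omega>. (S \<omega>)\<^sup>2)"
    unfolding S_def power2_eq_square sum_product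
    by (simp add: intVV)
  have ES2: "(\<integral>\<omega>. (S \<omega>)\<^sup>2 \<partial>M) \<le> real n * (1 + 2 * suminf w)"
  proof -
    have "(\<integral>\<omega>. (S \<omega>)\<^sup>2 \<partial>M) = (\<integral>\<omega>. (\<Sum>i<n. \<Sum>j<n. V i \<omega> * V j \<omega>) \<partial>M)"
      unfolding S_def power2_eq_square sum_product by simp
    also have "\<dots> = (\<Sum>i<n. \<Sum>j<n. (\<integral>\<omega>. V i \<omega> * V j \<omega> \<partial>M))"
      by (simp add: intVV)
    also have "\<dots> \<le> (\<Sum>i<n. \<Sum>j<n. (if j = i then 1 else if j < i then w (i - j) else w (j - i)))"
      unfolding EVV by (intro sum_mono) (use bnd in \<open>auto simp: abs_le_iff\<close>)
    also have "\<dots> \<le> (\<Sum>i<n. 1 + 2 * suminf w)"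
      by (intro sum_mono row_bound w)
    finally show ?thesis by simp
  qed
  have sub: "{\<omega>\<in>space M. \<eta> < \<bar>(1 / real n) * (\<Sum>i<n. indicator (A i) \<omega>) - p\<bar>}
      \<subseteq> {\<omega>\<in>space M. (real n * \<eta>)\<^sup>2 \<le> (S \<omega>)\<^sup>2}"
  proof safe
    fix \<omega> assume "\<omega> \<in> space M" "\<eta> < \<bar>(1 / real n) * (\<Sum>i<n. indicator (A i) \<omega>) - p\<bar>"
    moreover have "(1 / real n) * (\<Sum>i<n. indicator (A i) \<omega>) - p = S \<omega> / real n"
      using n by (simp add: S_def V_def sum_subtractf field_simps)
    ultimately have "\<eta> < \<bar>S \<omega>\<bar> / real n" by simp
    then have "real n * \<eta> < \<bar>S \<omega>\<bar>" using n by (simp add: field_simps)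
    then show "(real n * \<eta>)\<^sup>2 \<le> (S \<omega>)\<^sup>2" using n eta
      by (metis abs_le_square_iff abs_of_pos less_imp_le mult_pos_pos of_nat_0_less_iff)
  qed
  have "measure M {\<omega>\<in>space M. \<eta> < \<bar>(1 / real n) * (\<Sum>i<n. indicator (A i) \<omega>) - p\<bar>}
      \<le> measure M {\<omega>\<in>space M. (real n * \<eta>)\<^sup>2 \<le> (S \<omega>)\<^sup>2}"
    by (rule finite_measure_mono[OF sub]) (simp add: S_def)
  also have "\<dots> \<le> (\<integral>\<omega>. (S \<omega>)\<^sup>2 \<partial>M) / (real n * \<eta>)\<^sup>2"
    by (rule integral_Markov_inequality_measure[OF intS2, where A="space M"]) (use n eta in auto)
  also have "\<dots> \<le> real n * (1 + 2 * suminf w) / (real n * \<eta>)\<^sup>2"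
    by (intro divide_right_mono ES2) simp
  also have "\<dots> = (1 + 2 * suminf w) / (real n * \<eta>\<^sup>2)"
    using n eta by (simp add: power2_eq_square field_simps)
  finally show ?thesis .
qed

lemma gen_sets_facts:
  assumes Xm: "\<And>i. X i \<in> measurable M MX" and B: "B \<in> sets MX" and i: "i \<in> I"
  shows "X i -` B \<inter> space M \<in> gen_sets M MX X I"
    "space M - (X i -` B \<inter> space M) \<in> gen_sets M MX X I"
    "gen_sets M MX X I \<subseteq> sets M" "space M \<in> gen_sets M MX X I"
proof -
  let ?G = "(\<Union>j\<in>I. {X j -` B \<inter> space M | B. B \<in> sets MX})"
  have G: "?G \<subseteq> Pow (space M)" by auto
  have eq: "gen_sets M MX X I = sigma_sets (space M) ?G"
    unfolding gen_sets_def using sets_measure_of[OF G] by simp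
  have b: "X i -` B \<inter> space M \<in> ?G" using B i by auto
  show "X i -` B \<inter> space M \<in> gen_sets M MX X I" unfolding eq using b by (rule sigma_sets.Basic)
  show "space M - (X i -` B \<inter> space M) \<in> gen_sets M MX X I" unfolding eq using b
    by (intro sigma_sets.Compl sigma_sets.Basic)
  have "?G \<subseteq> sets M" using Xm by (auto intro: measurable_sets)
  then show "gen_sets M MX X I \<subseteq> sets M" unfolding eq by (rule sets.sigma_sets_subset)
  show "space M \<in> gen_sets M MX X I" unfolding eq by (rule sigma_sets_top)
qed

theorem lemma6:
  fixes M :: "'w measure"
    and MU :: "'u measure"
    and X :: "nat \<Rightarrow> 'w \<Rightarrow> ('s::finite \<times> 'a::finite \<times> 's) \<times> 'u"
    and p :: ereal
    and G :: "('a \<Rightarrow> 's \<times> 'u \<Rightarrow> real) set"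
    and nrm :: "('a \<Rightarrow> 's \<times> 'u \<Rightarrow> real) \<Rightarrow> real"
    and Gb :: real
  defines "MX \<equiv> (count_space UNIV \<Otimes>\<^sub>M count_space UNIV \<Otimes>\<^sub>M count_space UNIV) \<Otimes>\<^sub>M MU"
    and "MSU \<equiv> count_space UNIV \<Otimes>\<^sub>M MU"
    and "Gs \<equiv> normalized_class G nrm"
    and "h \<equiv> (\<lambda>g i \<omega>. real_cond_exp M
                 (vimage_algebra (space M) (\<lambda>\<omega>. obsZ (X i \<omega>)) (count_space UNIV))
                 (\<lambda>\<omega>. g (acA (X i \<omega>)) (stS (X i \<omega>), cfU (X i \<omega>))) \<omega>)"
  assumes prob: "prob_space M"
    and X_meas: "\<And>i. X i \<in> measurable M MX"
    (* stationary chain of X *)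
    and stat: "strictly_stationary M MX X"
    and markov: "\<And>i. cond_indep M (gen_sets M MX X {Suc i}) (gen_sets M MX X {..<i})
                                    (gen_sets M MX X {i})"
    (* iid confounders: U_i independent of the past and of S_i *)
    and iid_conf: "\<And>i. prob_space.indep_set M
                     (rv_sets M MU (\<lambda>\<omega>. cfU (X i \<omega>)))
                     (join_sets M (gen_sets M MX X {..<i})
                                  (rv_sets M (count_space UNIV) (\<lambda>\<omega>. stS (X i \<omega>))))"
    (* behaviour policy: A_i depends on the past only through (S_i, U_i) *)
    and policy: "\<And>i. cond_indep M (rv_sets M (count_space UNIV) (\<lambda>\<omega>. acA (X i \<omega>)))
                     (gen_sets M MX X {..<i})
                     (rv_sets M MSU (\<lambda>\<omega>. (stS (X i \<omega>), cfU (X i \<omega>))))"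
    (* MDPUC transition: S'_i depends on the past only through (S_i, A_i, U_i) *)
    and transition: "\<And>i. cond_indep M (rv_sets M (count_space UNIV) (\<lambda>\<omega>. stS' (X i \<omega>)))
                     (gen_sets M MX X {..<i})
                     (join_sets M (rv_sets M MSU (\<lambda>\<omega>. (stS (X i \<omega>), cfU (X i \<omega>))))
                                  (rv_sets M (count_space UNIV) (\<lambda>\<omega>. acA (X i \<omega>))))"
    (* normed class of measurable functions *)
    and norm: "is_norm_on_fun nrm"
    and G_meas: "\<And>g a. g \<in> G \<Longrightarrow> g a \<in> borel_measurable MSU"
    (* Mixing *)
    and p_gt: "2 < p"
    and mixing: "summable (\<lambda>k. real k powr mix_exponent p * beta_mix M MX X k)"
    (* Uniformly Bounded Functions *)
    and Gb_pos: "0 < Gb"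
    and bounded: "\<And>g a s u. g \<in> Gs \<Longrightarrow> \<bar>g a (s, u)\<bar> \<le> Gb"
    (* Uniform Bracketing Entropy, L_p w.r.t. the stationary law of (S, U) *)
    and bracketing: "\<And>a. finite_bracketing_integral
                        (distr M MSU (\<lambda>\<omega>. (stS (X 0 \<omega>), cfU (X 0 \<omega>))))
                        p ((\<lambda>g. g a) ` Gs)"
  shows "\<forall>\<epsilon>>0. (\<lambda>n. outer_prob M
            {\<omega>\<in>space M.
               (SUP g\<in>Gs. ereal \<bar>(1 / real n) * (\<Sum>i<n. (h g i \<omega>)\<^sup>2)
                                - prob_space.expectation M (\<lambda>\<omega>'. (h g 0 \<omega>')\<^sup>2)\<bar>)
               > ereal \<epsilon>}) \<longlonglongrightarrow> 0"
proof -
  interpret prob_space M by (rule prob)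
  have MX_eq: "MX = count_space UNIV \<Otimes>\<^sub>M MU"
    unfolding MX_def by (simp add: pair_measure_countable)
  have mZ[measurable]: "obsZ \<in> MX \<rightarrow>\<^sub>M count_space UNIV"
    unfolding MX_eq obsZ_def by measurable
  have mA[measurable]: "acA \<in> MX \<rightarrow>\<^sub>M count_space UNIV"
    unfolding MX_eq acA_def[abs_def] by (rule measurable_compose[OF measurable_fst]) simp
  have mSU[measurable]: "(\<lambda>x. (stS x, cfU x)) \<in> MX \<rightarrow>\<^sub>M MSU"
    unfolding MX_eq MSU_def stS_def cfU_def
    by (intro measurable_Pair measurable_snd measurable_compose[OF measurable_fst]) simp
  have Xm[measurable]: "X i \<in> M \<rightarrow>\<^sub>M MX" for i by (rule X_meas)
  have Gs_meas: "g a \<in> borel_measurable MSU" if gs: "g \<in> Gs" for g a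
  proof -
    obtain g0 where "g0 \<in> G" "g = (\<lambda>a x. g0 a x / nrm g0)"
      using gs unfolding Gs_def normalized_class_def by blast
    then show ?thesis using G_meas[of g0 a] by simp
  qed
  have Gs_bnd: "\<bar>g a y\<bar> \<le> Gb" if "g \<in> Gs" for g a y
    using bounded[OF that, of a "fst y" "snd y"] by simp
  have Psi_meas: "(\<lambda>x. g (acA x) (stS x, cfU x)) \<in> borel_measurable MX" if "g \<in> Gs" for g
    by (rule measurable_compose_countable[OF _ mA]) (rule measurable_compose[OF mSU Gs_meas[OF that]])
  have distrX: "distr M MX (X i) = distr M MX (X 0)" for i
  proof -
    have m1: "(\<lambda>\<omega>. \<lambda>j\<in>{..<1::nat}. X (k + j) \<omega>) \<in> M \<rightarrow>\<^sub>M PiM {..<1} (\<lambda>_. MX)" for k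
      by (rule measurable_restrict) (rule Xm)
    have m0: "(\<lambda>x. x 0) \<in> PiM {..<1::nat} (\<lambda>_. MX) \<rightarrow>\<^sub>M MX"
      by (rule measurable_component_singleton) simp
    have st: "distr M (PiM {..<1} (\<lambda>_. MX)) (\<lambda>\<omega>. \<lambda>j\<in>{..<1::nat}. X (i + j) \<omega>)
       = distr M (PiM {..<1} (\<lambda>_. MX)) (\<lambda>\<omega>. \<lambda>j\<in>{..<1::nat}. X (0 + j) \<omega>)"
      using stat unfolding strictly_stationary_def by simp
    have "distr M MX (X k) = distr (distr M (PiM {..<1} (\<lambda>_. MX)) (\<lambda>\<omega>. \<lambda>j\<in>{..<1::nat}. X (k + j) \<omega>)) MX (\<lambda>x. x 0)" for k
      by (subst distr_distr[OF m0 m1]) (simp add: comp_def)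
    from this[of i] this[of 0] st show ?thesis by simp
  qed
  define Z where "Z i \<omega> = obsZ (X i \<omega>)" for i \<omega>
  define f where "f g i \<omega> = g (acA (X i \<omega>)) (stS (X i \<omega>), cfU (X i \<omega>))"
    for g :: "'a \<Rightarrow> 's \<times> 'u \<Rightarrow> real" and i \<omega>
  define Aev where "Aev i z = {\<omega>\<in>space M. Z i \<omega> = z}" for i z
  define pz where "pz z = measure M (Aev 0 z)" for z
  define Ez where "Ez g z = (\<integral>\<omega>. indicator (Aev 0 z) \<omega> * f g 0 \<omega> \<partial>M)" for g z
  define c where "c g z = Ez g z / pz z" for g z
  define F where "F i = vimage_algebra (space M) (Z i) (count_space UNIV)" for i
  have mZi[measurable]: "Z i \<in> M \<rightarrow>\<^sub>M count_space UNIV" for i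
    unfolding Z_def by (rule measurable_compose[OF Xm mZ])
  have Bz: "obsZ -` {z} \<inter> space MX \<in> sets MX" for z
    by (rule measurable_sets[OF mZ]) simp
  have Aev_eq: "Aev i z = X i -` (obsZ -` {z} \<inter> space MX) \<inter> space M" for i z
    using measurable_space[OF Xm[of i]] by (auto simp: Aev_def Z_def)
  have Aev_sets: "Aev i z \<in> sets M" for i z
    unfolding Aev_eq by (rule measurable_sets[OF Xm Bz])
  have pAi: "measure M (Aev i z) = pz z" for i z
    unfolding pz_def Aev_eq using measure_distr[OF Xm Bz, of i z] measure_distr[OF Xm Bz, of 0 z] distrX[of i]
    by simp
  have f_meas: "f g i \<in> borel_measurable M" if "g \<in> Gs" for g i
  proof -
    have "(\<lambda>\<omega>. (\<lambda>x. g (acA x) (stS x, cfU x)) (X i \<omega>)) \<in> borel_measurable M"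
      by (rule measurable_compose[OF Xm Psi_meas[OF that]])
    then show ?thesis unfolding f_def by simp
  qed
  have f_bnd: "\<bar>f g i \<omega>\<bar> \<le> Gb" if "g \<in> Gs" for g i \<omega>
    unfolding f_def by (rule Gs_bnd[OF that])
  have f_int: "integrable M (f g i)" if "g \<in> Gs" for g i
    by (rule integrable_const_bound[where B=Gb]) (use f_bnd[OF that] f_meas[OF that] in auto)
  have EAi: "(\<integral>\<omega>. indicator (Aev i z) \<omega> * f g i \<omega> \<partial>M) = Ez g z" if gs: "g \<in> Gs" for g i z
  proof -
    define Phi where "Phi x = indicator (obsZ -` {z} \<inter> space MX) x * g (acA x) (stS x, cfU x)" for x
    have Phi_m: "Phi \<in> borel_measurable MX"
      unfolding Phi_def using Psi_meas[OF gs] Bz[of z] by measurable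
    have "(\<integral>\<omega>. indicator (Aev k z) \<omega> * f g k \<omega> \<partial>M) = integral\<^sup>L (distr M MX (X k)) Phi" for k
    proof -
      have "integral\<^sup>L (distr M MX (X k)) Phi = (\<integral>\<omega>. Phi (X k \<omega>) \<partial>M)"
        by (rule integral_distr[OF Xm Phi_m])
      also have "\<dots> = (\<integral>\<omega>. indicator (Aev k z) \<omega> * f g k \<omega> \<partial>M)"
        by (rule Bochner_Integration.integral_cong[OF refl])
           (auto simp: Phi_def Aev_eq f_def indicator_def)
      finally show ?thesis by simp
    qed
    from this[of i] this[of 0] show ?thesis unfolding Ez_def distrX[of i] by simp
  qed
  have c_bnd: "\<bar>c g z\<bar> \<le> Gb" if gs: "g \<in> Gs" for g z
  proof -
    have i1: "integrable M (\<lambda>\<omega>. indicator (Aev 0 z) \<omega> * f g 0 \<omega>)"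
      using integrable_mult_indicator[OF Aev_sets f_int[OF gs]] by simp
    have i2: "integrable M (\<lambda>\<omega>. indicator (Aev 0 z) \<omega> * Gb)"
      using Aev_sets[of 0 z] by (auto intro!: integrable_real_indicator simp: less_top[symmetric])
    have "\<bar>Ez g z\<bar> \<le> (\<integral>\<omega>. \<bar>indicator (Aev 0 z) \<omega> * f g 0 \<omega>\<bar> \<partial>M)"
      unfolding Ez_def by (rule integral_abs_bound)
    also have "\<dots> \<le> (\<integral>\<omega>. indicator (Aev 0 z) \<omega> * Gb \<partial>M)"
      by (rule integral_mono) (use i1 i2 f_bnd[OF gs] in \<open>auto simp: indicator_def\<close>)
    also have "\<dots> = Gb * pz z"
      using sets.sets_into_space[OF Aev_sets[of 0 z]] by (simp add: pz_def Int_absorb2 mult.commute)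
    finally have "\<bar>Ez g z\<bar> \<le> Gb * pz z" .
    moreover have "0 \<le> pz z" by (simp add: pz_def)
    ultimately show ?thesis unfolding c_def using Gb_pos
      by (cases "pz z = 0") (auto simp: abs_divide field_simps)
  qed
  have Fsub: "subalgebra M (F i)" for i
  proof -
    have "sets (F i) = {Z i -` A \<inter> space M | A. A \<in> sets (count_space UNIV)}"
      unfolding F_def by (rule sets_vimage_algebra2) auto
    then have "sets (F i) \<subseteq> sets M" using mZi[of i] by (auto intro: measurable_sets)
    then show ?thesis unfolding subalgebra_def F_def by simp
  qed
  have sfs: "sigma_finite_subalgebra M (F i)" for i
    by (intro finite_measure_subalgebra_is_sigma_finite finite_measure_subalgebra.intro
        finite_measure_subalgebra_axioms.intro Fsub finite_measure_axioms)
  have h_eq: "h g i = real_cond_exp M (F i) (f g i)" for g i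
    unfolding h_def F_def f_def Z_def by simp
  have Cond: "h g i \<omega> = c g (Z i \<omega>)" if gs: "g \<in> Gs" and om: "\<omega> \<in> space M" and pz: "pz (Z i \<omega>) \<noteq> 0"
    for g i \<omega>
  proof -
    interpret S: sigma_finite_subalgebra M "F i" by (rule sfs)
    define z where "z = Z i \<omega>"
    define u where "u = h g i"
    have um: "u \<in> borel_measurable (F i)" unfolding u_def h_eq by (rule borel_measurable_cond_exp)
    have setsF: "sets (F i) = {Z i -` A \<inter> space M | A. A \<in> sets (count_space UNIV)}"
      unfolding F_def by (rule sets_vimage_algebra2) auto
    have "u -` {u \<omega>} \<inter> space (F i) \<in> sets (F i)"
      by (rule measurable_sets[OF um]) simp
    then obtain B where B: "u -` {u \<omega>} \<inter> space M = Z i -` B \<inter> space M"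
      unfolding setsF by (auto simp: F_def)
    have const: "u \<omega>' = u \<omega>" if "\<omega>' \<in> Aev i z" for \<omega>'
    proof -
      have "\<omega> \<in> Z i -` B \<inter> space M" using B om by blast
      then have "\<omega>' \<in> Z i -` B \<inter> space M" using that by (auto simp: Aev_def z_def)
      then show ?thesis using B by blast
    qed
    have AF: "Aev i z \<in> sets (F i)"
      unfolding setsF Aev_def by auto
    have "(\<integral>x\<in>Aev i z. f g i x \<partial>M) = (\<integral>x\<in>Aev i z. real_cond_exp M (F i) (f g i) x \<partial>M)"
      by (rule S.real_cond_exp_intA[OF f_int[OF gs] AF])
    then have "(\<integral>x. indicator (Aev i z) x * f g i x \<partial>M) = (\<integral>x. indicator (Aev i z) x * u x \<partial>M)"
      unfolding u_def h_eq set_lebesgue_integral_def by simp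
    also have "\<dots> = (\<integral>x. indicator (Aev i z) x * u \<omega> \<partial>M)"
      by (rule Bochner_Integration.integral_cong[OF refl]) (auto simp: indicator_def const)
    also have "\<dots> = pz z * u \<omega>"
      using sets.sets_into_space[OF Aev_sets[of i z]] pAi[of i z] by (simp add: Int_absorb2)
    finally have "Ez g z = pz z * u \<omega>" using EAi[OF gs] by simp
    then show ?thesis using pz unfolding c_def u_def z_def by simp
  qed
  define N where "N = (\<Union>i. \<Union>z. (if pz z = 0 then Aev i z else {}))"
  have N_null: "N \<in> null_sets M"
  proof -
    have "(if pz z = 0 then Aev i z else {}) \<in> null_sets M" for i z
    proof (cases "pz z = 0")
      case True
      then have "emeasure M (Aev i z) = 0" using pAi[of i z] Aev_sets[of i z]
        by (simp add: emeasure_eq_measure)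
      then show ?thesis using True Aev_sets[of i z] by (simp add: null_sets_def)
    qed simp
    then show ?thesis unfolding N_def by (intro null_sets_UN)
  qed
  have pos: "pz (Z i \<omega>) \<noteq> 0" if "\<omega> \<in> space M" "\<omega> \<notin> N" for i \<omega>
  proof
    assume "pz (Z i \<omega>) = 0"
    then have "\<omega> \<in> N" using that(1) unfolding N_def Aev_def by auto
    then show False using that(2) by simp
  qed
  have cZ_sum: "(c g (Z i \<omega>))\<^sup>2 = (\<Sum>z\<in>UNIV. (c g z)\<^sup>2 * indicator (Aev i z) \<omega>)" if "\<omega> \<in> space M" for g i \<omega>
  proof -
    have "(\<Sum>z\<in>UNIV. (c g z)\<^sup>2 * indicator (Aev i z) \<omega>) = (\<Sum>z\<in>UNIV. if z = Z i \<omega> then (c g z)\<^sup>2 else 0)"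
      by (rule sum.cong) (auto simp: Aev_def indicator_def that)
    then show ?thesis by simp
  qed
  have E0: "expectation (\<lambda>\<omega>. (h g 0 \<omega>)\<^sup>2) = (\<Sum>z\<in>UNIV. (c g z)\<^sup>2 * pz z)" if gs: "g \<in> Gs" for g
  proof -
    have hm: "h g 0 \<in> borel_measurable M" unfolding h_eq by (rule borel_measurable_cond_exp2)
    have cm: "(\<lambda>\<omega>. c g (Z 0 \<omega>)) \<in> borel_measurable M"
      by (rule measurable_compose[OF mZi]) simp
    have "expectation (\<lambda>\<omega>. (h g 0 \<omega>)\<^sup>2) = expectation (\<lambda>\<omega>. (\<Sum>z\<in>UNIV. (c g z)\<^sup>2 * indicator (Aev 0 z) \<omega>))"
    proof (rule integral_cong_AE)
      show "(\<lambda>\<omega>. (h g 0 \<omega>)\<^sup>2) \<in> borel_measurable M" using hm by measurable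
      show "(\<lambda>\<omega>. \<Sum>z\<in>UNIV. (c g z)\<^sup>2 * indicator (Aev 0 z) \<omega>) \<in> borel_measurable M"
        using Aev_sets by measurable
      show "AE x in M. (h g 0 x)\<^sup>2 = (\<Sum>z\<in>UNIV. (c g z)\<^sup>2 * indicator (Aev 0 z) x)"
        using AE_space AE_not_in[OF N_null]
      proof eventually_elim
        case (elim x)
        then have "h g 0 x = c g (Z 0 x)" using Cond[OF gs _ pos] by auto
        then show ?case using cZ_sum[OF elim(1)] by simp
      qed
    qed
    also have "\<dots> = (\<Sum>z\<in>UNIV. (c g z)\<^sup>2 * pz z)"
    proof -
      have "expectation (\<lambda>\<omega>. (\<Sum>z\<in>UNIV. (c g z)\<^sup>2 * indicator (Aev 0 z) \<omega>))
          = (\<Sum>z\<in>UNIV. expectation (\<lambda>\<omega>. (c g z)\<^sup>2 * indicator (Aev 0 z) \<omega>))"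
      proof -
        have ii: "integrable M (\<lambda>\<omega>. (c g z)\<^sup>2 * indicator (Aev 0 z) \<omega>)" for z
          using Aev_sets[of 0 z] by (auto intro!: integrable_real_indicator simp: less_top[symmetric])
        show ?thesis by (rule Bochner_Integration.integral_sum[OF ii])
      qed
      also have "\<dots> = (\<Sum>z\<in>UNIV. (c g z)\<^sup>2 * pz z)"
        using sets.sets_into_space[OF Aev_sets] by (simp add: pAi Int_absorb2)
      finally show ?thesis .
    qed
    finally show ?thesis .
  qed
  define Y where "Y n z \<omega> = (1 / real n) * (\<Sum>i<n. indicator (Aev i z) \<omega>) - pz z" for n z \<omega>
  have key: "(1 / real n) * (\<Sum>i<n. (h g i \<omega>)\<^sup>2) - expectation (\<lambda>\<omega>'. (h g 0 \<omega>')\<^sup>2)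
      = (\<Sum>z\<in>UNIV. (c g z)\<^sup>2 * Y n z \<omega>)"
    if gs: "g \<in> Gs" and om: "\<omega> \<in> space M" and nN: "\<omega> \<notin> N" for g n \<omega>
  proof -
    have "(\<Sum>i<n. (h g i \<omega>)\<^sup>2) = (\<Sum>i<n. \<Sum>z\<in>UNIV. (c g z)\<^sup>2 * indicator (Aev i z) \<omega>)"
      by (rule sum.cong) (simp_all add: Cond[OF gs om pos[OF om nN]] cZ_sum[OF om])
    also have "\<dots> = (\<Sum>z\<in>UNIV. \<Sum>i<n. (c g z)\<^sup>2 * indicator (Aev i z) \<omega>)"
      by (rule sum.swap)
    also have "\<dots> = (\<Sum>z\<in>UNIV. (c g z)\<^sup>2 * (\<Sum>i<n. indicator (Aev i z) \<omega>))"
      by (simp add: sum_distrib_left)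
    finally have s1: "(\<Sum>i<n. (h g i \<omega>)\<^sup>2) = (\<Sum>z\<in>UNIV. (c g z)\<^sup>2 * (\<Sum>i<n. indicator (Aev i z) \<omega>))" .
    have "(\<Sum>z\<in>UNIV. (c g z)\<^sup>2 * Y n z \<omega>)
        = (\<Sum>z\<in>UNIV. (1 / real n) * ((c g z)\<^sup>2 * (\<Sum>i<n. indicator (Aev i z) \<omega>)) - (c g z)\<^sup>2 * pz z)"
      by (rule sum.cong) (simp_all add: Y_def algebra_simps)
    also have "\<dots> = (1 / real n) * (\<Sum>z\<in>UNIV. (c g z)\<^sup>2 * (\<Sum>i<n. indicator (Aev i z) \<omega>))
        - (\<Sum>z\<in>UNIV. (c g z)\<^sup>2 * pz z)"
      by (simp add: sum_subtractf sum_distrib_left)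
    finally show ?thesis using s1 E0[OF gs] by simp
  qed
  have bound: "\<bar>(\<Sum>z\<in>UNIV. (c g z)\<^sup>2 * Y n z \<omega>)\<bar> \<le> real CARD('s \<times> 'a \<times> 's) * (Gb\<^sup>2 * \<eta>)"
    if gs: "g \<in> Gs" and Yb: "\<And>z. \<bar>Y n z \<omega>\<bar> \<le> \<eta>" for g n \<omega> \<eta>
  proof -
    have "\<bar>(\<Sum>z\<in>UNIV. (c g z)\<^sup>2 * Y n z \<omega>)\<bar> \<le> (\<Sum>z\<in>UNIV. \<bar>(c g z)\<^sup>2 * Y n z \<omega>\<bar>)"
      by (rule sum_abs)
    also have "\<dots> \<le> (\<Sum>z\<in>(UNIV::('s \<times> 'a \<times> 's) set). Gb\<^sup>2 * \<eta>)"
    proof (rule sum_mono)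
      fix z
      have "(c g z)\<^sup>2 \<le> Gb\<^sup>2" using c_bnd[OF gs, of z] Gb_pos by (simp add: abs_le_square_iff[symmetric])
      then show "\<bar>(c g z)\<^sup>2 * Y n z \<omega>\<bar> \<le> Gb\<^sup>2 * \<eta>"
        using Yb[of z] by (simp add: abs_mult mult_mono)
    qed
    also have "\<dots> = real CARD('s \<times> 'a \<times> 's) * (Gb\<^sup>2 * \<eta>)" by simp
    finally show ?thesis .
  qed
  define e where "e = mix_exponent p"
  have e_nonneg: "0 \<le> e"
  proof (cases p)
    case (real r)
    then show ?thesis using p_gt by (simp add: e_def mix_exponent_def)
  qed (use p_gt in \<open>auto simp: e_def mix_exponent_def\<close>)
  have gfX: "X i -` B \<inter> space M \<in> gen_sets M MX X I" "space M - (X i -` B \<inter> space M) \<in> gen_sets M MX X I"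
    "gen_sets M MX X I \<subseteq> sets M" "space M \<in> gen_sets M MX X I"
    if "B \<in> sets MX" "i \<in> I" for B i I
    by (rule gen_sets_facts[OF X_meas that])+
  have bc_le1: "beta_coef M (gen_sets M MX X {..n}) (gen_sets M MX X {n+k..}) \<le> 1" for n k
  proof -
    have i1: "n \<in> {..n}" "n + k \<in> {n+k..}" by auto
    show ?thesis
      by (rule beta_coef_le1[OF prob gfX(3)[OF sets.top i1(1)] gfX(3)[OF sets.top i1(2)]
          gfX(4)[OF sets.top i1(1)] gfX(4)[OF sets.top i1(2)]])
  qed
  have bc_le_bm: "beta_coef M (gen_sets M MX X {..n}) (gen_sets M MX X {n+k..}) \<le> beta_mix M MX X k" for n k
    unfolding beta_mix_def by (rule cSUP_upper) (auto intro!: bdd_aboveI2 bc_le1)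
  have cov_bc: "\<bar>measure M (Aev n z \<inter> Aev (n+k) z) - pz z * pz z\<bar> \<le> 2 * beta_mix M MX X k" for n k z
  proof -
    have "\<bar>measure M (Aev n z \<inter> Aev (n+k) z) - measure M (Aev n z) * measure M (Aev (n+k) z)\<bar>
        \<le> 2 * beta_coef M (gen_sets M MX X {..n}) (gen_sets M MX X {n+k..})"
    proof -
      have i1: "n \<in> {..n}" "n + k \<in> {n+k..}" by auto
      show ?thesis unfolding Aev_eq
        by (rule beta_coef_ge[OF prob gfX(3)[OF sets.top i1(1)] gfX(3)[OF sets.top i1(2)]
            gfX(1,2)[OF Bz i1(1)] gfX(1,2)[OF Bz i1(2)]])
    qed
    then show ?thesis using bc_le_bm[of n k] by (simp add: pAi)
  qed
  have bm_nonneg: "0 \<le> beta_mix M MX X k" for k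
    using cov_bc[of 0 undefined k] by linarith
  define w where "w k = 2 * (real k powr e * beta_mix M MX X k)" for k
  have w_nonneg: "0 \<le> w k" for k unfolding w_def using bm_nonneg by simp
  have w_summ: "summable w" unfolding w_def e_def by (rule summable_mult[OF mixing])
  have cov: "\<bar>measure M (Aev i z \<inter> Aev j z) - pz z * pz z\<bar> \<le> w (j - i)" if "i < j" for i j z
  proof -
    have "1 \<le> real (j - i) powr e" using that e_nonneg by (intro ge_one_powr_ge_zero) auto
    then have "beta_mix M MX X (j - i) \<le> real (j - i) powr e * beta_mix M MX X (j - i)"
      using bm_nonneg[of "j - i"] by (metis mult_1 mult_right_mono)
    then show ?thesis using cov_bc[of i z "j - i"] that unfolding w_def by simp
  qed
  have LLN: "measure M {\<omega>\<in>space M. \<eta> < \<bar>Y n z \<omega>\<bar>} \<le> (1 + 2 * suminf w) / (real n * \<eta>\<^sup>2)"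
    if "0 < n" "0 < \<eta>" for n z \<eta>
    unfolding Y_def by (rule lln_events[OF prob Aev_sets pAi cov w_summ w_nonneg that])
  note Aev_sets[measurable]
  show ?thesis
  proof (intro allI impI)
    fix \<epsilon> :: real assume eps: "0 < \<epsilon>"
    define K where "K = real CARD('s \<times> 'a \<times> 's)"
    have K_pos: "0 < K" unfolding K_def by simp
    define \<eta> where "\<eta> = \<epsilon> / (Gb\<^sup>2 * K)"
    have eta: "0 < \<eta>" using eps Gb_pos K_pos by (simp add: \<eta>_def)
    have Keta: "K * (Gb\<^sup>2 * \<eta>) = \<epsilon>" using Gb_pos K_pos by (simp add: \<eta>_def field_simps)
    define C where "C = K * (1 + 2 * suminf w) / \<eta>\<^sup>2"
    define Bs where "Bs n z = {\<omega>\<in>space M. \<eta> < \<bar>Y n z \<omega>\<bar>}" for n z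
    define Ev where "Ev n = {\<omega>\<in>space M.
               (SUP g\<in>Gs. ereal \<bar>(1 / real n) * (\<Sum>i<n. (h g i \<omega>)\<^sup>2)
                                - prob_space.expectation M (\<lambda>\<omega>'. (h g 0 \<omega>')\<^sup>2)\<bar>)
               > ereal \<epsilon>}" for n
    have sub: "Ev n \<subseteq> (\<Union>z. Bs n z) \<union> N" for n
    proof
      fix \<omega> assume om: "\<omega> \<in> Ev n"
      then have oms: "\<omega> \<in> space M"
        and gt: "ereal \<epsilon> < (SUP g\<in>Gs. ereal \<bar>(1 / real n) * (\<Sum>i<n. (h g i \<omega>)\<^sup>2)
                                - prob_space.expectation M (\<lambda>\<omega>'. (h g 0 \<omega>')\<^sup>2)\<bar>)"
        by (auto simp: Ev_def)
      show "\<omega> \<in> (\<Union>z. Bs n z) \<union> N"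
      proof (rule ccontr)
        assume "\<omega> \<notin> (\<Union>z. Bs n z) \<union> N"
        then have nN: "\<omega> \<notin> N" and Yb: "\<And>z. \<bar>Y n z \<omega>\<bar> \<le> \<eta>" using oms by (auto simp: Bs_def not_less)
        have "(SUP g\<in>Gs. ereal \<bar>(1 / real n) * (\<Sum>i<n. (h g i \<omega>)\<^sup>2)
                                - prob_space.expectation M (\<lambda>\<omega>'. (h g 0 \<omega>')\<^sup>2)\<bar>) \<le> ereal \<epsilon>"
        proof (rule SUP_least)
          fix g assume gs: "g \<in> Gs"
          have "\<bar>(1 / real n) * (\<Sum>i<n. (h g i \<omega>)\<^sup>2) - expectation (\<lambda>\<omega>'. (h g 0 \<omega>')\<^sup>2)\<bar> \<le> \<epsilon>"
            using key[OF gs oms nN, of n] bound[OF gs Yb] Keta unfolding K_def by simp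
          then show "ereal \<bar>(1 / real n) * (\<Sum>i<n. (h g i \<omega>)\<^sup>2)
                                - prob_space.expectation M (\<lambda>\<omega>'. (h g 0 \<omega>')\<^sup>2)\<bar> \<le> ereal \<epsilon>"
            by simp
        qed
        then show False using gt by simp
      qed
    qed
    have Bm: "Bs n z \<in> sets M" for n z unfolding Bs_def Y_def by measurable
    have Um: "(\<Union>z. Bs n z) \<in> sets M" for n using Bm by auto
    have mb: "measure M ((\<Union>z. Bs n z) \<union> N) \<le> C / real n" if n: "0 < n" for n
    proof -
      have "measure M ((\<Union>z. Bs n z) \<union> N) = measure M (\<Union>z. Bs n z)"
        by (rule measure_Un_null_set[OF Um N_null])
      also have "\<dots> \<le> (\<Sum>z\<in>UNIV. measure M (Bs n z))"
        by (rule measure_UNION_le) (auto simp: Bm)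
      also have "\<dots> \<le> (\<Sum>z\<in>(UNIV::('s \<times> 'a \<times> 's) set). (1 + 2 * suminf w) / (real n * \<eta>\<^sup>2))"
        by (rule sum_mono) (unfold Bs_def, rule LLN[OF n eta])
      also have "\<dots> = C / real n" unfolding C_def K_def by simp
      finally show ?thesis .
    qed
    have op_le: "outer_prob M (Ev n) \<le> measure M ((\<Union>z. Bs n z) \<union> N)" for n
      unfolding outer_prob_def
    proof (rule cInf_lower)
      show "measure M ((\<Union>z. Bs n z) \<union> N) \<in> {measure M B |B. B \<in> sets M \<and> Ev n \<inter> space M \<subseteq> B}"
        using sub[of n] Um[of n] N_null by blast
      show "bdd_below {measure M B |B. B \<in> sets M \<and> Ev n \<inter> space M \<subseteq> B}"
        by (rule bdd_belowI[where m=0]) auto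
    qed
    have op_ge: "0 \<le> outer_prob M (Ev n)" for n
      unfolding outer_prob_def
      by (rule cInf_greatest) (auto intro!: exI[where x="space M"])
    have "(\<lambda>n. outer_prob M (Ev n)) \<longlonglongrightarrow> 0"
    proof (rule tendsto_sandwich[of "\<lambda>_. 0" _ _ "\<lambda>n. C / real n"])
      show "\<forall>\<^sub>F n in sequentially. 0 \<le> outer_prob M (Ev n)" using op_ge by simp
      show "\<forall>\<^sub>F n in sequentially. outer_prob M (Ev n) \<le> C / real n"
        using eventually_gt_at_top[of 0]
        by eventually_elim (use op_le mb in \<open>blast intro: order_trans\<close>)
      show "(\<lambda>_. 0) \<longlonglongrightarrow> (0::real)" by simp
      show "(\<lambda>n. C / real n) \<longlonglongrightarrow> 0" by (rule lim_const_over_n)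
    qed
    then show "(\<lambda>n. outer_prob M
            {\<omega>\<in>space M.
               (SUP g\<in>Gs. ereal \<bar>(1 / real n) * (\<Sum>i<n. (h g i \<omega>)\<^sup>2)
                                - prob_space.expectation M (\<lambda>\<omega>'. (h g 0 \<omega>')\<^sup>2)\<bar>)
               > ereal \<epsilon>}) \<longlonglongrightarrow> 0"
      unfolding Ev_def .
  qed
qed

end
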